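(* Let $\alpha\in\mathbb{R}\setminus\{0\}$, let $\delta^{\star}(\alpha)=1/\alpha^2$ if $\alpha\le 2$ and $\delta^{\star}(\alpha)=\frac{1}{2\alpha}\exp\{1-\frac{\alpha}{2}\}$ if $\alpha>2$, let $|\delta|\le\delta^{\star}(\alpha)$, and let $C(u,v)=uv+\delta(1-e^{\alpha(u-u^2)})(1-e^{\alpha(v-v^2)})$ on $[0,1]^2$. If $\delta\ge 0$ then $C$ is positively quadrant dependent, i.e. $C(u,v)\ge uv$ for all $(u,v)\in[0,1]^2$; if $\delta\le0$ then $C$ is negatively quadrant dependent, i.e. $C(u,v)\le uv$ for all $(u,v)\in[0,1]^2$. *)

theory Defs
  imports Complex_Main
begin

definition delta_star :: "real \<Rightarrow> real" where
  "delta_star \<alpha> = (if \<alpha> \<le> 2 then 1 / \<alpha>^2 else (1 / (2 * \<alpha>)) * exp (1 - \<alpha> / 2))"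

definition copC :: "real \<Rightarrow> real \<Rightarrow> real \<Rightarrow> real \<Rightarrow> real" where
  "copC \<alpha> \<delta> u v = u * v + \<delta> * (1 - exp (\<alpha> * (u - u^2))) * (1 - exp (\<alpha> * (v - v^2)))"

end

theory Submission
  imports Defs
begin

lemma prod_nonneg_aux:
  fixes \<alpha> u v :: real
  assumes "u \<in> {0..1}" "v \<in> {0..1}"
  shows "(1 - exp (\<alpha> * (u - u^2))) * (1 - exp (\<alpha> * (v - v^2))) \<ge> 0"
proof -
  have hu: "u - u^2 \<ge> 0" using assms by (auto simp: power2_eq_square mult_left_le)
  have hv: "v - v^2 \<ge> 0" using assms by (auto simp: power2_eq_square mult_left_le)
  show ?thesis
  proof (cases "\<alpha> \<ge> 0")
    case True
    then have "\<alpha> * (u - u^2) \<ge> 0" "\<alpha> * (v - v^2) \<ge> 0" using hu hv by auto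
    then have "1 - exp (\<alpha> * (u - u^2)) \<le> 0" "1 - exp (\<alpha> * (v - v^2)) \<le> 0" by auto
    then show ?thesis by (simp add: mult_nonpos_nonpos)
  next
    case False
    then have "\<alpha> * (u - u^2) \<le> 0" "\<alpha> * (v - v^2) \<le> 0" using hu hv
      by (auto simp: mult_nonpos_nonneg)
    then have "1 - exp (\<alpha> * (u - u^2)) \<ge> 0" "1 - exp (\<alpha> * (v - v^2)) \<ge> 0" by auto
    then show ?thesis by simp
  qed
qed

theorem proposition2:
  fixes \<alpha> \<delta> :: real
  assumes "\<alpha> \<noteq> 0"
    and "\<bar>\<delta>\<bar> \<le> delta_star \<alpha>"
  shows "(\<delta> \<ge> 0 \<longrightarrow> (\<forall>u\<in>{0..1}. \<forall>v\<in>{0..1}. copC \<alpha> \<delta> u v \<ge> u * v))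
       \<and> (\<delta> \<le> 0 \<longrightarrow> (\<forall>u\<in>{0..1}. \<forall>v\<in>{0..1}. copC \<alpha> \<delta> u v \<le> u * v))"
proof (intro conjI impI ballI)
  fix u v :: real
  assume "\<delta> \<ge> 0" "u \<in> {0..1}" "v \<in> {0..1}"
  then have "\<delta> * ((1 - exp (\<alpha> * (u - u^2))) * (1 - exp (\<alpha> * (v - v^2)))) \<ge> 0"
    using prod_nonneg_aux by simp
  then show "copC \<alpha> \<delta> u v \<ge> u * v" unfolding copC_def by (simp add: mult.assoc)
next
  fix u v :: real
  assume "\<delta> \<le> 0" "u \<in> {0..1}" "v \<in> {0..1}"
  then have "\<delta> * ((1 - exp (\<alpha> * (u - u^2))) * (1 - exp (\<alpha> * (v - v^2)))) \<le> 0"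
    using prod_nonneg_aux by (simp add: mult_nonpos_nonneg)
  then show "copC \<alpha> \<delta> u v \<le> u * v" unfolding copC_def by (simp add: mult.assoc)
qed

end
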